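(* Consider an NCG whose consumption price functions are $\tau_a(t)=\gamma_a t^{\beta}+\eta_a$ with constants $\gamma_a>0$, $\eta_a>0$ ($a\in A$) and $\beta\ge0$ independent of $a$. For a user volume vector $d$ let $d_{\min}=\min\{d_k:k=1,\dots,K\}$. Then there is a constant $c>0$ depending only on the game structure ($A$, $\mathcal S$, $r$, $\gamma_a$, $\eta_a$, $\beta$) such that for every user volume vector $d$ with $d_{\min}>0$, every SO-profile for $d$ is an $\epsilon$-approximate NE-profile with $\epsilon=c\, d_{\min}^{-\beta}$; that is, SO-profiles are $O(d_{\min}^{-\beta})$-approximate NE-profiles.
   Context: A non-atomic congestion game (NCG) consists of: a finite set $A$ of resources; an integer $K\ge 1$ of user groups; pairwise disjoint finite nonempty strategy sets $\mathcal S_1,\dots,\mathcal S_K$, $\mathcal S=\bigcup_k\mathcal S_k$; constants $r(a,s)\ge 0$ with $\sum_{a} r(a,s)>0$ for every $s$ and $\sum_{s} r(a,s)>0$ for every $a$; continuous nondecreasing consumption price functions $\tau_a:[0,\infty)\to[0,\infty)$; and a user volume vector $d\in\mathbb R_{\ge0}^K$. A feasible profile for $d$ is $f=(f_s)_{s\in\mathcal S}$, $f_s\ge0$, $\sum_{s\in\mathcal S_k}f_s=d_k$; loads $f_a=\sum_s r(a,s)f_s$, strategy prices $\tau_s(f)=\sum_a r(a,s)\tau_a(f_a)$, cost $C(f)=\sum_a f_a\tau_a(f_a)$. An SO-profile is a feasible profile minimizing $C$. For $\epsilon>0$, a feasible profile $f$ is an $\epsilon$-approximate NE-profile if for every $k$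 and all $s,s'\in\mathcal S_k$ with $f_s>0$, $\tau_s(f)\le(1+\epsilon)\tau_{s'}(f)$. (Routing games with BPR travel times $\tau_a(x)=\tau_a(0)(1+\alpha(x/u_a)^\beta)$ are the motivating special case.) *)

theory Defs
  imports Complex_Main
begin

text \<open>Profiles are functions on strategies; only their
values on the strategies in the union of the S k matter.\<close>

definition strategies :: "nat \<Rightarrow> (nat \<Rightarrow> 's set) \<Rightarrow> 's set" where
  "strategies K S = (\<Union>k<K. S k)"

definition feasible ::
  "nat \<Rightarrow> (nat \<Rightarrow> 's set) \<Rightarrow> (nat \<Rightarrow> real) \<Rightarrow> ('s \<Rightarrow> real) \<Rightarrow> bool" where
  "feasible K S d f \<longleftrightarrow>
     (\<forall>s\<in>strategies K S. f s \<ge> 0) \<and> (\<forall>k<K. (\<Sum>s\<in>S k. f s) = d k)"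

definition load ::
  "nat \<Rightarrow> (nat \<Rightarrow> 's set) \<Rightarrow> ('a \<Rightarrow> 's \<Rightarrow> real) \<Rightarrow> ('s \<Rightarrow> real) \<Rightarrow> 'a \<Rightarrow> real" where
  "load K S r f a = (\<Sum>s\<in>strategies K S. r a s * f s)"

definition strat_price ::
  "'a set \<Rightarrow> nat \<Rightarrow> (nat \<Rightarrow> 's set) \<Rightarrow> ('a \<Rightarrow> 's \<Rightarrow> real) \<Rightarrow> ('a \<Rightarrow> real \<Rightarrow> real)
   \<Rightarrow> ('s \<Rightarrow> real) \<Rightarrow> 's \<Rightarrow> real" where
  "strat_price A K S r \<tau> f s = (\<Sum>a\<in>A. r a s * \<tau> a (load K S r f a))"

definition total_cost ::
  "'a set \<Rightarrow> nat \<Rightarrow> (nat \<Rightarrow> 's set) \<Rightarrow> ('a \<Rightarrow> 's \<Rightarrow> real) \<Rightarrow> ('a \<Rightarrow> real \<Rightarrow> real)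
   \<Rightarrow> ('s \<Rightarrow> real) \<Rightarrow> real" where
  "total_cost A K S r \<tau> f = (\<Sum>a\<in>A. load K S r f a * \<tau> a (load K S r f a))"

definition SO_profile ::
  "'a set \<Rightarrow> nat \<Rightarrow> (nat \<Rightarrow> 's set) \<Rightarrow> ('a \<Rightarrow> 's \<Rightarrow> real) \<Rightarrow> ('a \<Rightarrow> real \<Rightarrow> real)
   \<Rightarrow> (nat \<Rightarrow> real) \<Rightarrow> ('s \<Rightarrow> real) \<Rightarrow> bool" where
  "SO_profile A K S r \<tau> d f \<longleftrightarrow> feasible K S d f \<and>
     (\<forall>g. feasible K S d g \<longrightarrow> total_cost A K S r \<tau> f \<le> total_cost A K S r \<tau> g)"

definition approx_NE_profile ::
  "'a set \<Rightarrow> nat \<Rightarrow> (nat \<Rightarrow> 's set) \<Rightarrow> ('a \<Rightarrow> 's \<Rightarrow> real) \<Rightarrow> ('a \<Rightarrow> real \<Rightarrow> real)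
   \<Rightarrow> (nat \<Rightarrow> real) \<Rightarrow> real \<Rightarrow> ('s \<Rightarrow> real) \<Rightarrow> bool" where
  "approx_NE_profile A K S r \<tau> d \<epsilon> f \<longleftrightarrow> feasible K S d f \<and>
     (\<forall>k<K. \<forall>s\<in>S k. \<forall>s'\<in>S k. f s > 0 \<longrightarrow>
        strat_price A K S r \<tau> f s \<le> (1 + \<epsilon>) * strat_price A K S r \<tau> f s')"

text \<open>Real power t^beta for t \<ge> 0 and beta \<ge> 0, with the convention 0^0 = 1
(Isabelle's powr has 0 powr 0 = 0).\<close>
definition rpow :: "real \<Rightarrow> real \<Rightarrow> real" where
  "rpow t \<beta> = (if \<beta> = 0 then 1 else t powr \<beta>)"

end

theory Submission
  imports Defs "HOL-Analysis.Analysis"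
begin

lemma powr_tangent:
  fixes x y p :: real
  assumes "p \<ge> 1" "x > 0" "y > 0"
  shows "x powr p - y powr p \<ge> (p * y powr (p - 1)) * (x - y)"
proof -
  have "convex_on {0<..} (\<lambda>x::real. x powr p)" using powr_convex assms(1) by blast
  then show ?thesis using assms
    by (intro convex_on_imp_above_tangent[where A = "{0<..}"])
       (auto intro!: derivative_eq_intros simp: interior_open)
qed

lemma phi_tangent:
  fixes x y \<beta> :: real
  assumes "\<beta> \<ge> 0" "x \<ge> 0" "y \<ge> 0"
  shows "x * rpow x \<beta> - y * rpow y \<beta> \<ge> ((1 + \<beta>) * rpow y \<beta>) * (x - y)"
proof (cases "\<beta> = 0")
  case True then show ?thesis by (simp add: rpow_def)
next
  case False
  then have b: "\<beta> > 0" using assms by simp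
  have e: "\<And>z::real. z \<ge> 0 \<Longrightarrow> z * rpow z \<beta> = z powr (1 + \<beta>)"
    using False by (auto simp: rpow_def powr_add)
  show ?thesis
  proof (cases "y = 0")
    case True then show ?thesis using b assms by (simp add: rpow_def)
  next
    case yne: False
    show ?thesis
    proof (cases "x = 0")
      case True
      have "0 \<le> \<beta> * (y powr \<beta> * y)" using b assms by simp
      then have "(1+\<beta>) * y powr \<beta> * y \<ge> y powr \<beta> * y" by (simp add: algebra_simps)
      then show ?thesis using True False assms yne by (simp add: rpow_def powr_add algebra_simps)
    next
      case False
      have "x powr (1+\<beta>) - y powr (1+\<beta>) \<ge> ((1+\<beta>) * y powr (1+\<beta> - 1)) * (x - y)"
        using powr_tangent[of "1+\<beta>" x y] b assms False yne by simp
      then show ?thesis using e assms \<open>\<beta>\<noteq>0\<close> by (simp add: rpow_def)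
    qed
  qed
qed

lemma rpow_tendsto:
  fixes x \<beta> :: real and g :: "real \<Rightarrow> real"
  assumes "\<beta> \<ge> 0" "(g \<longlongrightarrow> x) F" "eventually (\<lambda>t. g t \<ge> 0) F"
  shows "((\<lambda>t. rpow (g t) \<beta>) \<longlongrightarrow> rpow x \<beta>) F"
proof (cases "\<beta> = 0")
  case True then show ?thesis by (simp add: rpow_def)
next
  case False
  then have "((\<lambda>t. g t powr \<beta>) \<longlongrightarrow> x powr \<beta>) F"
    using assms by (intro tendsto_powr') auto
  then show ?thesis using False by (simp add: rpow_def)
qed

lemma exists_ge_avg:
  fixes f :: "'s \<Rightarrow> real"
  assumes "finite T" "T \<noteq> {}"
  shows "\<exists>s\<in>T. f s \<ge> (\<Sum>t\<in>T. f t) / card T"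
proof (rule ccontr)
  assume "\<not> ?thesis"
  then have "\<forall>s\<in>T. f s < (\<Sum>t\<in>T. f t) / card T" by auto
  then have "(\<Sum>t\<in>T. f t) < (\<Sum>t\<in>T. (\<Sum>t\<in>T. f t) / card T)"
    using assms by (intro sum_strict_mono) auto
  also have "\<dots> = (\<Sum>t\<in>T. f t)" using assms by simp
  finally show False by simp
qed

lemma load_nonneg:
  assumes "feasible K S d f" "\<forall>a\<in>A. \<forall>s\<in>strategies K S. r a s \<ge> 0" "a \<in> A"
  shows "load K S r f a \<ge> 0"
  using assms unfolding load_def feasible_def by (auto intro!: sum_nonneg)

lemma cost_eq:
  assumes "feasible K S d f" "\<forall>a\<in>A. \<forall>s\<in>strategies K S. r a s \<ge> 0"
    and "\<forall>a\<in>A. \<forall>t\<ge>0. \<tau> a t = \<gamma> a * rpow t \<beta> + \<eta> a"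
  shows "total_cost A K S r \<tau> f = (\<Sum>a\<in>A. \<gamma> a * (load K S r f a * rpow (load K S r f a) \<beta>) + \<eta> a * load K S r f a)"
  unfolding total_cost_def
proof (rule sum.cong)
  fix a assume "a \<in> A"
  then have "load K S r f a \<ge> 0" by (rule load_nonneg[OF assms(1,2)])
  then have "\<tau> a (load K S r f a) = \<gamma> a * rpow (load K S r f a) \<beta> + \<eta> a" using assms(3) \<open>a \<in> A\<close> by simp
  then show "load K S r f a * \<tau> a (load K S r f a) = \<gamma> a * (load K S r f a * rpow (load K S r f a) \<beta>) + \<eta> a * load K S r f a"
    by (simp add: distrib_left mult_ac)
qed simp

lemma sum_ind: "finite T \<Longrightarrow> (\<Sum>t\<in>T. c t * (if t = s then 1 else 0)) = (if s \<in> T then c s else (0::real))"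
  by (induct T rule: finite_induct) auto

lemma KKT:
  fixes A :: "'a set" and K :: nat and S :: "nat \<Rightarrow> 's set"
    and r :: "'a \<Rightarrow> 's \<Rightarrow> real" and \<gamma> \<eta> :: "'a \<Rightarrow> real" and \<beta> :: real
    and \<tau> :: "'a \<Rightarrow> real \<Rightarrow> real"
  assumes finA: "finite A"
    and finS: "\<forall>k<K. finite (S k) \<and> S k \<noteq> {}"
    and disjS: "\<forall>k<K. \<forall>l<K. k \<noteq> l \<longrightarrow> S k \<inter> S l = {}"
    and r_nonneg: "\<forall>a\<in>A. \<forall>s\<in>strategies K S. r a s \<ge> 0"
    and gamma_pos: "\<forall>a\<in>A. \<gamma> a > 0"
    and beta_nonneg: "\<beta> \<ge> 0"
    and tau_def: "\<forall>a\<in>A. \<forall>t\<ge>0. \<tau> a t = \<gamma> a * rpow t \<beta> + \<eta> a"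
    and SO: "SO_profile A K S r \<tau> d f"
    and k: "k < K" and s: "s \<in> S k" and s': "s' \<in> S k" and fs: "f s > 0"
  shows "(\<Sum>a\<in>A. r a s * ((1+\<beta>) * \<gamma> a * rpow (load K S r f a) \<beta> + \<eta> a))
       \<le> (\<Sum>a\<in>A. r a s' * ((1+\<beta>) * \<gamma> a * rpow (load K S r f a) \<beta> + \<eta> a))"
proof (cases "s = s'")
  case True then show ?thesis by simp
next
  case ne: False
  let ?T = "strategies K S"
  have finT: "finite ?T" using finS unfolding strategies_def by auto
  have sT: "s \<in> ?T" and s'T: "s' \<in> ?T" using s s' k unfolding strategies_def by auto
  have feas: "feasible K S d f" using SO unfolding SO_profile_def by simp
  define x where "x a = load K S r f a" for a
  define D where "D a = r a s' - r a s" for a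
  define mc where "mc a t = (1+\<beta>) * \<gamma> a * rpow t \<beta> + \<eta> a" for a t
  define g where "g \<delta> = (\<lambda>t. f t + \<delta> * ((if t = s' then 1 else 0) - (if t = s then 1 else 0)))" for \<delta> :: real
  have loadg: "load K S r (g \<delta>) a = x a + \<delta> * D a" for \<delta> a
  proof -
    have e: "r a t * g \<delta> t = r a t * f t + \<delta> * (r a t * (if t = s' then 1 else 0)) - \<delta> * (r a t * (if t = s then 1 else 0))" for t
      unfolding g_def by (simp add: right_diff_distrib distrib_left)
    have "load K S r (g \<delta>) a = (\<Sum>t\<in>?T. r a t * f t) + \<delta> * (\<Sum>t\<in>?T. r a t * (if t = s' then 1 else 0)) - \<delta> * (\<Sum>t\<in>?T. r a t * (if t = s then 1 else 0))"
      unfolding load_def e by (simp only: sum.distrib sum_subtractf sum_distrib_left)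
    also have "\<dots> = x a + \<delta> * D a"
      using sT s'T finT by (simp add: sum_ind x_def load_def D_def right_diff_distrib)
    finally show ?thesis .
  qed
  have feasg: "feasible K S d (g \<delta>)" if "0 \<le> \<delta>" "\<delta> \<le> f s" for \<delta>
    unfolding feasible_def
  proof (intro conjI allI ballI impI)
    fix t assume "t \<in> ?T"
    then have "f t \<ge> 0" using feas unfolding feasible_def by auto
    then show "g \<delta> t \<ge> 0" using that ne unfolding g_def by auto
  next
    fix l assume l: "l < K"
    have fl: "finite (S l)" using finS l by auto
    have iff: "s \<in> S l \<longleftrightarrow> s' \<in> S l" using disjS l k s s' by blast
    have e: "g \<delta> t = f t + \<delta> * (1 * (if t = s' then 1 else 0)) - \<delta> * (1 * (if t = s then 1 else 0))" for t
      unfolding g_def by (simp add: right_diff_distrib)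
    have "(\<Sum>t\<in>S l. g \<delta> t) = (\<Sum>t\<in>S l. f t) + \<delta> * (\<Sum>t\<in>S l. 1 * (if t = s' then 1 else 0)) - \<delta> * (\<Sum>t\<in>S l. 1 * (if t = s then 1 else 0))"
      unfolding e by (simp only: sum.distrib sum_subtractf sum_distrib_left)
    also have "\<dots> = (\<Sum>t\<in>S l. f t)" using fl iff by (simp only: sum_ind)
    also have "\<dots> = d l" using feas l unfolding feasible_def by auto
    finally show "(\<Sum>t\<in>S l. g \<delta> t) = d l" .
  qed
  define G where "G \<delta> = (\<Sum>a\<in>A. D a * mc a (x a + \<delta> * D a))" for \<delta>
  have Gpos: "G \<delta> \<ge> 0" if d0: "0 < \<delta>" "\<delta> \<le> f s" for \<delta>
  proof -
    have fg: "feasible K S d (g \<delta>)" using feasg that by simp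
    have xn: "x a \<ge> 0" if "a \<in> A" for a using load_nonneg[OF feas r_nonneg that] x_def by simp
    have yn: "x a + \<delta> * D a \<ge> 0" if "a \<in> A" for a using load_nonneg[OF fg r_nonneg that] loadg by simp
    have "total_cost A K S r \<tau> f \<le> total_cost A K S r \<tau> (g \<delta>)"
      using SO fg unfolding SO_profile_def by blast
    then have "(\<Sum>a\<in>A. \<gamma> a * (x a * rpow (x a) \<beta>) + \<eta> a * x a)
       \<le> (\<Sum>a\<in>A. \<gamma> a * ((x a + \<delta> * D a) * rpow (x a + \<delta> * D a) \<beta>) + \<eta> a * (x a + \<delta> * D a))"
      using cost_eq[OF feas r_nonneg tau_def] cost_eq[OF fg r_nonneg tau_def] by (simp add: loadg x_def)
    also have "\<dots> \<le> (\<Sum>a\<in>A. \<gamma> a * (x a * rpow (x a) \<beta>) + \<eta> a * x a + \<delta> * (D a * mc a (x a + \<delta> * D a)))"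
    proof (rule sum_mono)
      fix a assume a: "a \<in> A"
      define y where "y = x a + \<delta> * D a"
      have "x a * rpow (x a) \<beta> - y * rpow y \<beta> \<ge> ((1 + \<beta>) * rpow y \<beta>) * (x a - y)"
        using phi_tangent[OF beta_nonneg xn[OF a] yn[OF a]] y_def by simp
      then have "\<gamma> a * (x a * rpow (x a) \<beta> - y * rpow y \<beta>) \<ge> \<gamma> a * (((1 + \<beta>) * rpow y \<beta>) * (x a - y))"
        using gamma_pos a by (intro mult_left_mono) auto
      then show "\<gamma> a * (y * rpow y \<beta>) + \<eta> a * y \<le> \<gamma> a * (x a * rpow (x a) \<beta>) + \<eta> a * x a + \<delta> * (D a * mc a y)"
        unfolding mc_def y_def by (simp add: algebra_simps)
    qed
    also have "\<dots> = (\<Sum>a\<in>A. \<gamma> a * (x a * rpow (x a) \<beta>) + \<eta> a * x a) + \<delta> * G \<delta>"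
      unfolding G_def by (simp add: sum.distrib sum_distrib_left)
    finally have "0 \<le> \<delta> * G \<delta>" by simp
    then show ?thesis using d0 by (simp add: zero_le_mult_iff)
  qed
  have lim: "(G \<longlongrightarrow> G 0) (at_right 0)"
  proof -
    have ev: "eventually (\<lambda>\<delta>. 0 < \<delta> \<and> \<delta> < f s) (at_right (0::real))"
      using fs by (auto simp: eventually_at_right_field intro!: exI[of _ "f s"])
    have "((\<lambda>\<delta>. rpow (x a + \<delta> * D a) \<beta>) \<longlongrightarrow> rpow (x a + 0 * D a) \<beta>) (at_right 0)" if a: "a \<in> A" for a
    proof (rule rpow_tendsto[OF beta_nonneg])
      show "((\<lambda>\<delta>. x a + \<delta> * D a) \<longlongrightarrow> x a + 0 * D a) (at_right 0)"
        by (intro tendsto_intros)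
      show "\<forall>\<^sub>F \<delta> in at_right 0. 0 \<le> x a + \<delta> * D a"
        using ev
      proof eventually_elim
        case (elim \<delta>)
        then have "feasible K S d (g \<delta>)" using feasg by simp
        then show ?case using load_nonneg[OF _ r_nonneg a] loadg by metis
      qed
    qed
    then show ?thesis unfolding G_def mc_def
      by (intro tendsto_sum tendsto_mult tendsto_add tendsto_const) auto
  qed
  have "0 \<le> G 0"
  proof (rule tendsto_lowerbound[OF lim])
    show "\<forall>\<^sub>F \<delta> in at_right 0. 0 \<le> G \<delta>"
      using fs Gpos by (auto simp: eventually_at_right_field intro!: exI[of _ "f s"])
  qed simp
  moreover have "G 0 = (\<Sum>a\<in>A. r a s' * mc a (x a)) - (\<Sum>a\<in>A. r a s * mc a (x a))"
    unfolding G_def D_def by (simp add: left_diff_distrib sum_subtractf)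
  ultimately show ?thesis unfolding mc_def x_def by simp
qed

lemma rpow_nonneg: "0 \<le> u \<Longrightarrow> 0 \<le> rpow u \<beta>"
  by (simp add: rpow_def)

lemma rpow_pos: "0 < u \<Longrightarrow> 0 < rpow u \<beta>"
  by (simp add: rpow_def)

lemma rpow_mono: "0 \<le> \<beta> \<Longrightarrow> 0 \<le> u \<Longrightarrow> u \<le> v \<Longrightarrow> rpow u \<beta> \<le> rpow v \<beta>"
  by (simp add: rpow_def powr_mono2)

lemma rpow_mult: "0 \<le> u \<Longrightarrow> 0 \<le> v \<Longrightarrow> rpow (u * v) \<beta> = rpow u \<beta> * rpow v \<beta>"
  by (simp add: rpow_def powr_mult)

lemma rpow_div: "0 < u \<Longrightarrow> 0 < v \<Longrightarrow> rpow (u / v) \<beta> = u powr \<beta> / v powr \<beta>"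
  by (simp add: rpow_def powr_divide)

theorem theorem5:
  fixes A :: "'a set" and K :: nat and S :: "nat \<Rightarrow> 's set"
    and r :: "'a \<Rightarrow> 's \<Rightarrow> real" and \<gamma> \<eta> :: "'a \<Rightarrow> real" and \<beta> :: real
    and \<tau> :: "'a \<Rightarrow> real \<Rightarrow> real"
  assumes finA: "finite A"
    and K_pos: "K \<ge> 1"
    and finS: "\<forall>k<K. finite (S k) \<and> S k \<noteq> {}"
    and disjS: "\<forall>k<K. \<forall>l<K. k \<noteq> l \<longrightarrow> S k \<inter> S l = {}"
    and r_nonneg: "\<forall>a\<in>A. \<forall>s\<in>strategies K S. r a s \<ge> 0"
    and r_strat: "\<forall>s\<in>strategies K S. (\<Sum>a\<in>A. r a s) > 0"
    and r_res: "\<forall>a\<in>A. (\<Sum>s\<in>strategies K S. r a s) > 0"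
    and gamma_pos: "\<forall>a\<in>A. \<gamma> a > 0"
    and eta_pos: "\<forall>a\<in>A. \<eta> a > 0"
    and beta_nonneg: "\<beta> \<ge> 0"
    and tau_def: "\<forall>a\<in>A. \<forall>t\<ge>0. \<tau> a t = \<gamma> a * rpow t \<beta> + \<eta> a"
  shows "\<exists>c>0. \<forall>d :: nat \<Rightarrow> real.
           (\<forall>k<K. d k \<ge> 0) \<longrightarrow> Min (d ` {..<K}) > 0 \<longrightarrow>
           (\<forall>f. SO_profile A K S r \<tau> d f \<longrightarrow>
                approx_NE_profile A K S r \<tau> d (c * Min (d ` {..<K}) powr (- \<beta>)) f)"
proof -
  let ?T = "strategies K S"
  have finT: "finite ?T" using finS unfolding strategies_def by auto
  define N where "N = real (card ?T)"
  have S0: "S 0 \<noteq> {}" using finS K_pos by auto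
  have "S 0 \<subseteq> ?T" unfolding strategies_def by (rule UN_upper) (use K_pos in simp)
  then have "?T \<noteq> {}" using S0 by blast
  then have "card ?T > 0" using finT by (simp add: card_gt_0_iff)
  then have Npos: "N > 0" by (simp add: N_def)
  define H where "H = (\<Sum>s\<in>?T. \<Sum>a\<in>A. r a s * \<eta> a)"
  define P where "P = (\<Sum>s\<in>?T. \<Sum>a\<in>A. if r a s > 0 then 1 / (r a s * \<gamma> a * rpow (r a s) \<beta>) else 0)"
  have Pterm: "1 / (r a s * \<gamma> a * rpow (r a s) \<beta>) \<le> P" if "s \<in> ?T" "a \<in> A" "r a s > 0" for a s
  proof -
    have nn: "0 \<le> (if r a s > 0 then 1 / (r a s * \<gamma> a * rpow (r a s) \<beta>) else 0)" if "a \<in> A" for s a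
    proof (cases "r a s > 0")
      case True
      have "0 < \<gamma> a" using gamma_pos that by blast
      moreover have "0 < rpow (r a s) \<beta>" using True by (rule rpow_pos)
      ultimately have "0 < r a s * \<gamma> a * rpow (r a s) \<beta>" using True by simp
      then show ?thesis using True by simp
    qed simp
    have "1 / (r a s * \<gamma> a * rpow (r a s) \<beta>) = (if r a s > 0 then 1 / (r a s * \<gamma> a * rpow (r a s) \<beta>) else 0)"
      using that by simp
    also have "\<dots> \<le> (\<Sum>a\<in>A. if r a s > 0 then 1 / (r a s * \<gamma> a * rpow (r a s) \<beta>) else 0)"
      using that finA nn by (intro member_le_sum) auto
    also have "\<dots> \<le> P" unfolding P_def
      using that finT nn by (intro member_le_sum sum_nonneg) auto
    finally show ?thesis .
  qed
  have Hs: "(\<Sum>a\<in>A. r a s * \<eta> a) \<le> H" if "s \<in> ?T" for s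
    unfolding H_def using that finT r_nonneg eta_pos
    by (intro member_le_sum sum_nonneg mult_nonneg_nonneg) auto
  have H0: "H \<ge> 0" unfolding H_def using r_nonneg eta_pos
    by (intro sum_nonneg mult_nonneg_nonneg) auto
  have Ppos: "P > 0"
  proof -
    obtain s where s: "s \<in> ?T" using \<open>?T \<noteq> {}\<close> by auto
    have "(\<Sum>a\<in>A. r a s) > 0" using r_strat s by auto
    then obtain a where a: "a \<in> A" "r a s > 0"
      by (metis not_less sum_nonpos)
    have "0 < 1 / (r a s * \<gamma> a * rpow (r a s) \<beta>)"
      using a gamma_pos rpow_pos by auto
    then show ?thesis using Pterm[OF s a] by linarith
  qed
  define c where "c = (H + 1) * (1 + \<beta>) * P * N powr \<beta>"
  have cpos: "c > 0" unfolding c_def using H0 beta_nonneg Ppos Npos by auto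
  show ?thesis
  proof (intro exI[of _ c] conjI allI impI cpos)
    fix d :: "nat \<Rightarrow> real" and f
    assume dnn: "\<forall>k<K. d k \<ge> 0" and mpos: "Min (d ` {..<K}) > 0" and SO: "SO_profile A K S r \<tau> d f"
    define m where "m = Min (d ` {..<K})"
    have mpos': "m > 0" using mpos m_def by simp
    have feas: "feasible K S d f" using SO unfolding SO_profile_def by simp
    define x where "x a = load K S r f a" for a
    have xn: "x a \<ge> 0" if "a \<in> A" for a using load_nonneg[OF feas r_nonneg that] x_def by simp
    define tp where "tp s = (\<Sum>a\<in>A. r a s * (\<gamma> a * rpow (x a) \<beta> + \<eta> a))" for s
    define ts where "ts s = (\<Sum>a\<in>A. r a s * ((1+\<beta>) * \<gamma> a * rpow (x a) \<beta> + \<eta> a))" for s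
    define Hf where "Hf s = (\<Sum>a\<in>A. r a s * \<eta> a)" for s
    have sp: "strat_price A K S r \<tau> f s = tp s" for s
      unfolding strat_price_def tp_def
    proof (rule sum.cong)
      fix a assume "a \<in> A" then show "r a s * \<tau> a (load K S r f a) = r a s * (\<gamma> a * rpow (x a) \<beta> + \<eta> a)"
        using tau_def xn x_def by simp
    qed simp
    have ts_tp: "ts s = (1+\<beta>) * tp s - \<beta> * Hf s" for s
    proof -
      have "ts s = (\<Sum>a\<in>A. (1+\<beta>) * (r a s * (\<gamma> a * rpow (x a) \<beta> + \<eta> a)) - \<beta> * (r a s * \<eta> a))"
        unfolding ts_def by (rule sum.cong) (simp_all add: algebra_simps)
      also have "\<dots> = (1+\<beta>) * tp s - \<beta> * Hf s"
        unfolding tp_def Hf_def by (simp add: sum_subtractf sum_distrib_left)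
      finally show ?thesis .
    qed
    have ts_le: "ts s \<le> (1+\<beta>) * tp s" if "s \<in> ?T" for s
    proof -
      have "Hf s \<ge> 0" unfolding Hf_def using that r_nonneg eta_pos
        by (intro sum_nonneg mult_nonneg_nonneg) auto
      then show ?thesis using ts_tp beta_nonneg by (simp add: mult_nonneg_nonneg)
    qed
    have tp_le: "tp s \<le> ts s" if "s \<in> ?T" for s
    proof -
      have "Hf s \<ge> 0" unfolding Hf_def using that r_nonneg eta_pos
        by (intro sum_nonneg mult_nonneg_nonneg) auto
      have gr: "0 \<le> \<gamma> a * rpow (x a) \<beta>" if "a \<in> A" for a
        using gamma_pos that rpow_nonneg[OF xn[OF that], of \<beta>] by (metis less_imp_le mult_nonneg_nonneg)
      have "tp s \<ge> Hf s" unfolding tp_def Hf_def using that r_nonneg gr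
        by (intro sum_mono mult_left_mono) auto
      have "\<beta> * Hf s \<le> \<beta> * tp s" using \<open>tp s \<ge> Hf s\<close> beta_nonneg by (intro mult_left_mono) auto
      moreover have "ts s = tp s + \<beta> * tp s - \<beta> * Hf s" using ts_tp[of s] by (simp add: algebra_simps)
      ultimately show ?thesis by linarith
    qed
    have KKT': "ts s \<le> ts s'" if "k < K" "s \<in> S k" "s' \<in> S k" "f s > 0" for k s s'
      using KKT[OF finA finS disjS r_nonneg gamma_pos beta_nonneg tau_def SO that] unfolding ts_def x_def .
    show "approx_NE_profile A K S r \<tau> d (c * Min (d ` {..<K}) powr - \<beta>) f"
      unfolding approx_NE_profile_def
    proof (intro conjI feas allI impI ballI)
      fix k s s' assume k: "k < K" and s: "s \<in> S k" and s': "s' \<in> S k" and fs: "f s > 0"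
      have sT: "s \<in> ?T" and s'T: "s' \<in> ?T" using k s s' unfolding strategies_def by auto
      have Sk: "finite (S k)" "S k \<noteq> {}" using finS k by auto
      obtain s0 where s0: "s0 \<in> S k" and fs0: "f s0 \<ge> (\<Sum>t\<in>S k. f t) / card (S k)"
        using exists_ge_avg[OF Sk] by blast
      have s0T: "s0 \<in> ?T" using k s0 unfolding strategies_def by auto
      have dk: "(\<Sum>t\<in>S k. f t) = d k" using feas k unfolding feasible_def by auto
      have "m \<le> d k" unfolding m_def using k by (intro Min_le) auto
      have cardle: "card (S k) \<le> card ?T" using k finT unfolding strategies_def by (intro card_mono) auto
      have cardpos: "card (S k) > 0" using Sk by (simp add: card_gt_0_iff)
      have "m / N \<le> d k / card (S k)"
        using \<open>m \<le> d k\<close> cardle cardpos mpos' N_def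
        by (intro frac_le) auto
      then have fs0': "f s0 \<ge> m / N" using fs0 dk by simp
      have fs0pos: "f s0 > 0" using fs0' mpos' Npos by (smt (verit) divide_pos_pos)
      obtain a0 where a0: "a0 \<in> A" "r a0 s0 > 0"
      proof -
        have "(\<Sum>a\<in>A. r a s0) > 0" using r_strat s0T by auto
        then show ?thesis using that by (metis not_less sum_nonpos)
      qed
      have "r a0 s0 * f s0 \<le> x a0"
      proof -
        have "r a0 s0 * f s0 \<le> (\<Sum>t\<in>?T. r a0 t * f t)"
          using finT s0T r_nonneg a0 feas unfolding feasible_def
          by (intro member_le_sum mult_nonneg_nonneg) auto
        then show ?thesis unfolding x_def load_def .
      qed
      then have "rpow (r a0 s0 * f s0) \<beta> \<le> rpow (x a0) \<beta>"
        using a0 fs0pos beta_nonneg by (intro rpow_mono) auto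
      moreover have "rpow (r a0 s0 * f s0) \<beta> = rpow (r a0 s0) \<beta> * rpow (f s0) \<beta>"
        using a0 fs0pos by (intro rpow_mult) auto
      moreover have "rpow (m / N) \<beta> \<le> rpow (f s0) \<beta>"
        using fs0' mpos' Npos beta_nonneg by (intro rpow_mono) auto
      moreover have "rpow (m / N) \<beta> = m powr \<beta> / N powr \<beta>"
        using mpos' Npos by (intro rpow_div) auto
      ultimately have low1: "rpow (r a0 s0) \<beta> * (m powr \<beta> / N powr \<beta>) \<le> rpow (x a0) \<beta>"
        using rpow_pos[of "r a0 s0" \<beta>] a0 by (smt (verit) mult_left_mono)
      define q where "q = r a0 s0 * \<gamma> a0 * rpow (r a0 s0) \<beta>"
      have qpos: "q > 0" unfolding q_def using a0 gamma_pos rpow_pos by auto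
      have "1 / q \<le> P" using Pterm[OF s0T a0] q_def by simp
      then have qP: "1 / P \<le> q" using qpos Ppos by (simp add: field_simps)
      have "r a0 s0 * (\<gamma> a0 * rpow (x a0) \<beta> + \<eta> a0) \<le> tp s0"
        unfolding tp_def using finA a0 r_nonneg s0T gamma_pos eta_pos xn
        by (intro member_le_sum mult_nonneg_nonneg add_nonneg_nonneg rpow_nonneg) (auto intro: less_imp_le)
      moreover have "q * (m powr \<beta> / N powr \<beta>) \<le> r a0 s0 * (\<gamma> a0 * rpow (x a0) \<beta>)"
      proof -
        have "q * (m powr \<beta> / N powr \<beta>) = (r a0 s0 * \<gamma> a0) * (rpow (r a0 s0) \<beta> * (m powr \<beta> / N powr \<beta>))"
          unfolding q_def by simp
        also have "\<dots> \<le> (r a0 s0 * \<gamma> a0) * rpow (x a0) \<beta>"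
          using low1 a0 gamma_pos by (intro mult_left_mono) auto
        finally show ?thesis by simp
      qed
      moreover have "r a0 s0 * \<eta> a0 \<ge> 0" using a0 eta_pos by auto
      moreover have "1 / P * (m powr \<beta> / N powr \<beta>) \<le> q * (m powr \<beta> / N powr \<beta>)"
        using qP mpos' Npos by (intro mult_right_mono) auto
      ultimately have low2: "1 / P * (m powr \<beta> / N powr \<beta>) \<le> tp s0"
        by (simp add: distrib_left)
      have "tp s0 \<le> ts s0" using tp_le s0T by simp
      also have "\<dots> \<le> ts s'" using KKT'[OF k s0 s'] fs0pos by simp
      also have "\<dots> \<le> (1+\<beta>) * tp s'" using ts_le s'T by simp
      finally have low3: "1 / P * (m powr \<beta> / N powr \<beta>) \<le> (1+\<beta>) * tp s'" using low2 by simp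
      have "ts s \<le> ts s'" using KKT'[OF k s s' fs] .
      then have "(1+\<beta>) * tp s - \<beta> * Hf s \<le> (1+\<beta>) * tp s' - \<beta> * Hf s'" using ts_tp by simp
      moreover have "Hf s' \<ge> 0" unfolding Hf_def using s'T r_nonneg eta_pos
        by (intro sum_nonneg mult_nonneg_nonneg) auto
      moreover have "Hf s \<le> H" using Hs sT Hf_def by simp
      moreover have "Hf s \<ge> 0" unfolding Hf_def using sT r_nonneg eta_pos
        by (intro sum_nonneg mult_nonneg_nonneg) auto
      ultimately have ineq: "(1+\<beta>) * tp s - \<beta> * Hf s \<le> (1+\<beta>) * tp s' - \<beta> * Hf s'"
        and Hs'0: "Hf s' \<ge> 0" and HsH: "Hf s \<le> H" and Hs0: "Hf s \<ge> 0" by auto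
      have A1: "(1+\<beta>) * (tp s - tp s') \<le> \<beta> * Hf s - \<beta> * Hf s'"
        using ineq by (simp add: algebra_simps)
      have A2: "\<beta> * Hf s' \<ge> 0" using beta_nonneg Hs'0 by simp
      have "\<beta> * Hf s \<le> \<beta> * H" using HsH beta_nonneg by (rule mult_left_mono)
      moreover have "\<beta> * H \<le> (1+\<beta>) * H" using H0 by (simp add: distrib_right)
      ultimately have "(1+\<beta>) * (tp s - tp s') \<le> (1+\<beta>) * H" using A1 A2 by linarith
      then have diff: "tp s - tp s' \<le> H" using beta_nonneg mult_le_cancel_left_pos[of "1+\<beta>"] by simp
      define E where "E = c * m powr - \<beta>"
      have mb: "m powr \<beta> > 0" "N powr \<beta> > 0" using mpos' Npos by auto
      have Ee: "E = (H + 1) * (1 + \<beta>) * P * N powr \<beta> / m powr \<beta>"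
        unfolding E_def c_def by (simp add: powr_minus_divide)
      have "E * (1 / P * (m powr \<beta> / N powr \<beta>)) = (H + 1) * (1 + \<beta>)"
        unfolding Ee using mb Ppos by (simp add: field_simps)
      moreover have "E \<ge> 0" unfolding Ee using H0 beta_nonneg Ppos mb by simp
      ultimately have "(H + 1) * (1 + \<beta>) \<le> E * ((1+\<beta>) * tp s')"
        using low3 mult_left_mono[OF low3 \<open>E \<ge> 0\<close>] by simp
      also have "E * ((1+\<beta>) * tp s') = (1+\<beta>) * (E * tp s')" by (simp add: mult_ac)
      finally have "(1+\<beta>) * (H + 1) \<le> (1+\<beta>) * (E * tp s')" by (simp add: mult_ac)
      then have "H + 1 \<le> E * tp s'" using beta_nonneg mult_le_cancel_left_pos[of "1+\<beta>"] by simp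
      moreover have "(1 + E) * tp s' = tp s' + E * tp s'" by (simp add: distrib_right)
      ultimately have "tp s \<le> (1 + E) * tp s'" using diff by linarith
      then show "strat_price A K S r \<tau> f s \<le> (1 + c * Min (d ` {..<K}) powr - \<beta>) * strat_price A K S r \<tau> f s'"
        unfolding sp E_def m_def .
    qed
  qed
qed

end
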